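(* Let $P$ be a finite set of points in $\mathbb{R}^2$ in general position. For all vertices $u,v$ of the convex hull of $P$ and all points $p\in A(u)\setminus A(v)$, after deleting $v$ from $P$, the point $p$ belongs to $A(u)'$, the set of points active for $u$ with respect to $P\setminus\{v\}$.
   Context: Convex layers: $L^1$ is the set of vertices of the convex hull of the current point set, $L^2$ the set of vertices of the convex hull of the remaining points after removing $L^1$. A point $p$ is active for $u\in L^1$ if, upon deleting $u$ and recomputing the first and second convex layers, $p$ moves to the first layer; $A(u)$ is the set of points active for $u$. *)

theory Defs
  imports "HOL-Analysis.Analysis"
begin

definition layer1 :: "(real^2) set \<Rightarrow> (real^2) set" where
  "layer1 P = {x \<in> P. x extreme_point_of (convex hull P)}"

definition layer2 :: "(real^2) set \<Rightarrow> (real^2) set" where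
  "layer2 P = layer1 (P - layer1 P)"

definition active :: "(real^2) set \<Rightarrow> real^2 \<Rightarrow> (real^2) set" where
  "active P u = {p \<in> layer2 P. p \<in> layer1 (P - {u})}"

definition general_position :: "(real^2) set \<Rightarrow> bool" where
  "general_position P \<longleftrightarrow>
     (\<forall>a\<in>P. \<forall>b\<in>P. \<forall>c\<in>P. a \<noteq> b \<and> a \<noteq> c \<and> b \<noteq> c \<longrightarrow> \<not> collinear {a, b, c})"

end

theory Submission
  imports Defs
begin

lemma ext_sub:
  assumes "x extreme_point_of (convex hull S)" "T \<subseteq> S" "x \<in> T"
  shows "x extreme_point_of (convex hull T)"
proof -
  have h: "convex hull T \<subseteq> convex hull S" using assms(2) by (rule hull_mono)
  have "x \<in> convex hull T" using assms(3) by (simp add: hull_inc)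
  then show ?thesis using assms(1) h unfolding extreme_point_of_def by blast
qed

lemma layer1_sub:
  assumes "x \<in> layer1 S" "T \<subseteq> S" "x \<in> T"
  shows "x \<in> layer1 T"
  using assms ext_sub unfolding layer1_def by blast

theorem lemma3:
  fixes P :: "(real^2) set" and u v p :: "real^2"
  assumes "finite P"
    and "general_position P"
    and "u \<in> layer1 P" and "v \<in> layer1 P"
    and "p \<in> active P u - active P v"
  shows "p \<in> active (P - {v}) u"
proof -
  have p2: "p \<in> layer2 P" and pu: "p \<in> layer1 (P - {u})" and pv: "p \<notin> layer1 (P - {v})"
    using assms(5) unfolding active_def by auto
  have pP: "p \<in> P - layer1 P" using p2 unfolding layer2_def layer1_def by auto
  have pnv: "p \<noteq> v" using pP assms(4) by auto
  have a: "p \<in> layer1 (P - {v} - {u})"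
    by (rule layer1_sub[OF pu]) (use pP pnv pu in \<open>auto simp: layer1_def\<close>)
  have sub: "P - {v} - layer1 (P - {v}) \<subseteq> P - layer1 P"
    using layer1_sub[of _ P "P - {v}"] by blast
  have b: "p \<in> layer2 (P - {v})"
    unfolding layer2_def
    by (rule layer1_sub[OF p2[unfolded layer2_def] sub]) (use pP pnv pv in auto)
  show ?thesis using a b unfolding active_def by auto
qed

end
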